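(* Let $m,n$ be non-negative integers. For $y\in\mathbb{R}$ define \[ R_{m,n}(y)=\int_{-1}^1P_n(x)\,P_{n+m}(x+y)\,dx . \] Then \[ R_{m,n}(y)=\dfrac{\Gamma\left(m+n+\frac{1}{2}\right)}{\Gamma(m+1)\Gamma\left(n+\frac{3}{2}\right)}(2y)^m\ {}_4F_3\left(\begin{array}{c}-\frac{m}{2},\frac{1-m}{2},\frac{1-m}{2},\frac{2-m}{2}\\ 1-m,\ \frac{1}{2}-m-n,\ n+\frac{3}{2}\end{array};\dfrac{4}{y^2}\right). \]
   Context: $P_n$ is the Legendre polynomial ($P_0=1$, $P_1(x)=x$, $(n+1)P_{n+1}(x)=(2n+1)xP_n(x)-nP_{n-1}(x)$). ${}_4F_3$ is the generalized hypergeometric series $\sum_k\frac{(a_1)_k\cdots(a_4)_k}{(b_1)_k(b_2)_k(b_3)_k}\frac{z^k}{k!}$ with $(a)_k$ the Pochhammer symbol; here it terminates (at the first upper parameter that is a non-positive integer), so $y^m\,{}_4F_3(\dots;4/y^2)$ is a polynomial in $y$ and the right-hand side is understood as this polynomial. *)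

theory Defs
  imports "HOL-Analysis.Analysis"
begin

fun legendre :: "nat \<Rightarrow> real \<Rightarrow> real" where
  "legendre 0 x = 1"
| "legendre (Suc 0) x = x"
| "legendre (Suc (Suc n)) x =
     ((2 * real n + 3) * x * legendre (Suc n) x - (real n + 1) * legendre n x) / (real n + 2)"

definition hyp4F3_coeff :: "real \<Rightarrow> real \<Rightarrow> real \<Rightarrow> real \<Rightarrow> real \<Rightarrow> real \<Rightarrow> real \<Rightarrow> nat \<Rightarrow> real" where
  "hyp4F3_coeff a1 a2 a3 a4 b1 b2 b3 k =
     (pochhammer a1 k * pochhammer a2 k * pochhammer a3 k * pochhammer a4 k) /
     (pochhammer b1 k * pochhammer b2 k * pochhammer b3 k * fact k)"

text \<open>The paper's right-hand side for R_{m,n}: the polynomial in y equal to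
  (2y)^m 4F3(-m/2,(1-m)/2,(1-m)/2,(2-m)/2; 1-m, 1/2-m-n, n+3/2; 4/y^2),
  where the series terminates after the index k = m div 2 (the first upper
  parameter that is a non-positive integer vanishes in the Pochhammer symbol
  at k = m div 2 + 1).  Multiplying y^m into (4/y^2)^k gives 4^k y^(m-2k).\<close>
definition R_rhs :: "nat \<Rightarrow> nat \<Rightarrow> real \<Rightarrow> real" where
  "R_rhs m n y =
     Gamma (real m + real n + 1/2) / (Gamma (real m + 1) * Gamma (real n + 3/2)) * 2 ^ m *
     (\<Sum>k\<in>{0..m div 2}.
        hyp4F3_coeff (- real m / 2) ((1 - real m) / 2) ((1 - real m) / 2) ((2 - real m) / 2)
                     (1 - real m) (1/2 - real m - real n) (real n + 3/2) k
        * 4 ^ k * y ^ (m - 2 * k))"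

end

theory Submission
  imports Defs
begin


fun dleg :: "nat \<Rightarrow> real \<Rightarrow> real" where
  "dleg 0 x = 0"
| "dleg (Suc 0) x = 1"
| "dleg (Suc (Suc n)) x =
     ((2 * real n + 3) * (legendre (Suc n) x + x * dleg (Suc n) x) - (real n + 1) * dleg n x) / (real n + 2)"

lemma leg_deriv: "(legendre n has_real_derivative dleg n x) (at x)"
proof (induction n x rule: legendre.induct)
  case (1 x) then show ?case by simp
next
  case (2 x) then show ?case by (simp add: DERIV_ident)
next
  case (3 n x)
  have pos: "real n + 2 > 0" by simp
  show ?case
    unfolding legendre.simps dleg.simps
    apply (rule DERIV_cdivide)
    apply (rule derivative_eq_intros 3 refl)+
    apply (simp add: algebra_simps)
    done
qed

lemma leg_cont: "continuous_on UNIV (legendre n)"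
  using leg_deriv by (meson DERIV_isCont continuous_at_imp_continuous_on)

lemma dleg_cont2: "continuous_on UNIV (dleg n) \<and> continuous_on UNIV (dleg (Suc n))"
proof (induction n)
  case 0 then show ?case by simp
next
  case (Suc n)
  then have a: "continuous_on UNIV (dleg n)" and b: "continuous_on UNIV (dleg (Suc n))" by auto
  have "continuous_on UNIV (\<lambda>x. dleg (Suc (Suc n)) x)" unfolding dleg.simps
    using a b leg_cont[of "Suc n"] by (intro continuous_intros) auto
  then show ?case using b by simp
qed

lemma dleg_cont: "continuous_on UNIV (dleg n)" using dleg_cont2 by blast

lemma leg_cont_comp[continuous_intros]: "continuous_on S f \<Longrightarrow> continuous_on S (\<lambda>x. legendre n (f x))"
  by (rule continuous_on_compose2[OF leg_cont]) auto

lemma dleg_cont_comp[continuous_intros]: "continuous_on S f \<Longrightarrow> continuous_on S (\<lambda>x. dleg n (f x))"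
  by (rule continuous_on_compose2[OF dleg_cont]) auto

lemma leg_cd: "x * dleg (Suc n) x - dleg n x = (real n + 1) * legendre (Suc n) x \<and>
   (x^2 - 1) * dleg (Suc n) x = (real n + 1) * (x * legendre (Suc n) x - legendre n x)"
proof (induction n)
  case 0 then show ?case by (simp add: power2_eq_square)
next
  case (Suc n)
  have c: "dleg n x = x * dleg (Suc n) x - (real n + 1) * legendre (Suc n) x" using Suc by simp
  have d: "(x^2 - 1) * dleg (Suc n) x = (real n + 1) * (x * legendre (Suc n) x - legendre n x)" using Suc by simp
  have b: "dleg (Suc (Suc n)) x = x * dleg (Suc n) x + (real n + 2) * legendre (Suc n) x"
    unfolding dleg.simps c by (simp add: field_simps)
  have l: "legendre (Suc (Suc n)) x = ((2 * real n + 3) * x * legendre (Suc n) x - (real n + 1) * legendre n x) / (real n + 2)"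
    by simp
  have c2: "x * dleg (Suc (Suc n)) x - dleg (Suc n) x = (real (Suc n) + 1) * legendre (Suc (Suc n)) x"
  proof -
    have "x * dleg (Suc (Suc n)) x - dleg (Suc n) x = (x^2-1)*dleg (Suc n) x + (real n + 2) * x * legendre (Suc n) x"
      unfolding b by (simp add: power2_eq_square algebra_simps)
    also have "\<dots> = (real n+1)*(x*legendre (Suc n) x - legendre n x) + (real n + 2) * x * legendre (Suc n) x"
      using d by simp
    also have "\<dots> = (real (Suc n) + 1) * legendre (Suc (Suc n)) x"
      unfolding l by (simp add: field_simps)
    finally show ?thesis .
  qed
  have d2: "(x^2 - 1) * dleg (Suc (Suc n)) x = (real (Suc n) + 1) * (x * legendre (Suc (Suc n)) x - legendre (Suc n) x)"
  proof -
    have "(x^2 - 1) * dleg (Suc (Suc n)) x = x * ((x^2 - 1) * dleg (Suc n) x) + (real n + 2) * (x^2-1) * legendre (Suc n) x"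
      unfolding b by (simp add: algebra_simps)
    also have "\<dots> = x * ((real n + 1) * (x * legendre (Suc n) x - legendre n x)) + (real n + 2) * (x^2-1) * legendre (Suc n) x"
      using d by simp
    also have "\<dots> = (real (Suc n) + 1) * (x * legendre (Suc (Suc n)) x - legendre (Suc n) x)"
      unfolding l by (simp add: field_simps) (simp add: algebra_simps power2_eq_square)
    finally show ?thesis .
  qed
  show ?case using c2 d2 by blast
qed

lemma leg_b: "dleg (Suc (Suc n)) x = x * dleg (Suc n) x + (real n + 2) * legendre (Suc n) x"
proof -
  have c: "dleg n x = x * dleg (Suc n) x - (real n + 1) * legendre (Suc n) x" using leg_cd[of x n] by simp
  show ?thesis unfolding dleg.simps c by (simp add: field_simps)
qed

lemma dleg_a: "dleg (Suc (Suc j)) x = dleg j x + (2 * real j + 3) * legendre (Suc j) x"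
proof -
  have c: "dleg j x = x * dleg (Suc j) x - (real j + 1) * legendre (Suc j) x" using leg_cd[of x j] by simp
  show ?thesis unfolding leg_b c by (simp add: algebra_simps)
qed

definition Qf :: "nat \<Rightarrow> real \<Rightarrow> real" where
  "Qf a x = (case a of 0 \<Rightarrow> 0 | Suc j \<Rightarrow> (real j + 1) * (legendre j x - x * legendre (Suc j) x))"

lemma Qf_eq: "Qf a x = (1 - x^2) * dleg a x"
proof (cases a)
  case 0 then show ?thesis by (simp add: Qf_def)
next
  case (Suc j)
  have "(x^2 - 1) * dleg (Suc j) x = (real j + 1) * (x * legendre (Suc j) x - legendre j x)"
    using leg_cd[of x j] by blast
  then show ?thesis using Suc by (simp add: Qf_def algebra_simps)
qed

lemma Qf_deriv: "(Qf a has_real_derivative (- (real a * (real a + 1)) * legendre a x)) (at x)"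
proof (cases a)
  case 0
  have "Qf 0 = (\<lambda>x. 0)" by (simp add: Qf_def fun_eq_iff)
  then show ?thesis using 0 by simp
next
  case (Suc j)
  have c: "dleg j x = x * dleg (Suc j) x - (real j + 1) * legendre (Suc j) x" using leg_cd[of x j] by simp
  have e: "(\<lambda>x. Qf a x) = (\<lambda>x. (real j + 1) * (legendre j x - x * legendre (Suc j) x))"
    using Suc by (simp add: Qf_def fun_eq_iff)
  show ?thesis unfolding e
    apply (rule derivative_eq_intros leg_deriv refl)+
    apply (simp add: c Suc algebra_simps)
    done
qed

lemma cont_integrable: "continuous_on UNIV f \<Longrightarrow> (f :: real \<Rightarrow> real) integrable_on {a..b}"
  by (rule integrable_continuous_interval) (auto intro: continuous_on_subset)

lemma leg_orth:
  assumes "a \<noteq> b"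
  shows "integral {-1..1} (\<lambda>x. legendre a x * legendre b x) = 0"
proof -
  define W where "W x = Qf a x * legendre b x - Qf b x * legendre a x" for x
  define c where "c = real b * (real b + 1) - real a * (real a + 1)"
  have dW: "(W has_real_derivative c * (legendre a x * legendre b x)) (at x)" for x
    unfolding W_def
    apply (rule derivative_eq_intros Qf_deriv leg_deriv refl)+
    apply (simp add: Qf_eq c_def algebra_simps)
    done
  have "((\<lambda>x. c * (legendre a x * legendre b x)) has_integral (W 1 - W (-1))) {-1..1}"
    apply (rule fundamental_theorem_of_calculus)
     apply simp
    using dW by (auto simp: has_real_derivative_iff_has_vector_derivative[symmetric] intro: has_field_derivative_at_within)
  moreover have "W 1 = 0" "W (-1) = 0" unfolding W_def by (simp_all add: Qf_eq)
  ultimately have "((\<lambda>x. c * (legendre a x * legendre b x)) has_integral 0) {-1..1}" by simp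
  then have "integral {-1..1} (\<lambda>x. c * (legendre a x * legendre b x)) = 0"
    by (rule integral_unique)
  then have "c * integral {-1..1} (\<lambda>x. legendre a x * legendre b x) = 0" by simp
  moreover have "c \<noteq> 0"
  proof
    assume "c = 0"
    then have "real (b * (b + 1)) = real (a * (a + 1))" unfolding c_def by (simp add: algebra_simps)
    then have eq: "b * (b + 1) = a * (a + 1)" by (simp only: of_nat_eq_iff)
    show False
    proof (cases "a < b")
      case True then have "a * (a+1) < b * (b+1)" by (intro mult_strict_mono) auto
      then show False using eq by simp
    next
      case False then have "b < a" using assms by simp
      then have "b * (b+1) < a * (a+1)" by (intro mult_strict_mono) auto
      then show False using eq by simp
    qed
  qed
  ultimately show ?thesis by simp
qed


lemma int_lin:
  assumes "continuous_on UNIV f" "continuous_on UNIV g"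
  shows "integral {-1..1} (\<lambda>x. a * f x + b * g x) = a * integral {-1..1} f + b * integral {-1..1} (g :: real \<Rightarrow> real)"
proof -
  have i: "f integrable_on {-1..1}" "g integrable_on {-1..1}" using assms cont_integrable by auto
  have "integral {-1..1} (\<lambda>x. a * f x + b * g x) = integral {-1..1} (\<lambda>x. a * f x) + integral {-1..1} (\<lambda>x. b * g x)"
    by (rule integral_add) (auto intro!: cont_integrable continuous_intros assms)
  then show ?thesis by simp
qed

definition J :: "nat \<Rightarrow> real" where "J n = integral {-1..1} (\<lambda>x. legendre n x * legendre n x)"
definition K :: "nat \<Rightarrow> real" where "K n = integral {-1..1} (\<lambda>x. x * legendre n x * legendre (Suc n) x)"

lemma leg_rec2: "(real n + 2) * legendre (Suc (Suc n)) x = (2 * real n + 3) * x * legendre (Suc n) x - (real n + 1) * legendre n x"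
proof -
  have "real n + 2 \<noteq> 0" by simp
  then show ?thesis by (simp only: legendre.simps) simp
qed
lemma pw1: "(real n + 2) * (legendre n x * legendre (Suc (Suc n)) x) = (2 * real n + 3) * (x * legendre n x * legendre (Suc n) x) + (- (real n + 1)) * (legendre n x * legendre n x)"
proof -
  have "(real n + 2) * (legendre n x * legendre (Suc (Suc n)) x) = legendre n x * ((real n + 2) * legendre (Suc (Suc n)) x)"
    by (simp only: ac_simps)
  also have "\<dots> = legendre n x * ((2 * real n + 3) * x * legendre (Suc n) x - (real n + 1) * legendre n x)"
    by (simp only: leg_rec2)
  finally show ?thesis by (simp del: legendre.simps add: algebra_simps)
qed
lemma pw2: "(real j + 2) * (legendre (Suc (Suc j)) x * legendre (Suc (Suc j)) x) = (2 * real j + 3) * (x * legendre (Suc j) x * legendre (Suc (Suc j)) x) + (- (real j + 1)) * (legendre j x * legendre (Suc (Suc j)) x)"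
proof -
  have "(real j + 2) * (legendre (Suc (Suc j)) x * legendre (Suc (Suc j)) x) = legendre (Suc (Suc j)) x * ((real j + 2) * legendre (Suc (Suc j)) x)"
    by (simp only: ac_simps)
  also have "\<dots> = legendre (Suc (Suc j)) x * ((2 * real j + 3) * x * legendre (Suc j) x - (real j + 1) * legendre j x)"
    by (simp only: leg_rec2)
  finally show ?thesis by (simp del: legendre.simps add: algebra_simps)
qed

lemma rel1: "(2 * real n + 3) * K n = (real n + 1) * J n"
proof -
  have "0 = (real n + 2) * integral {-1..1} (\<lambda>x. legendre n x * legendre (Suc (Suc n)) x)"
    using leg_orth[of n "Suc (Suc n)"] by simp
  also have "\<dots> = integral {-1..1} (\<lambda>x. (real n + 2) * (legendre n x * legendre (Suc (Suc n)) x))"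
    by simp
  also have "\<dots> = integral {-1..1} (\<lambda>x. (2 * real n + 3) * (x * legendre n x * legendre (Suc n) x) + (- (real n + 1)) * (legendre n x * legendre n x))"
    unfolding pw1 ..
  also have "\<dots> = (2 * real n + 3) * K n + (- (real n + 1)) * J n"
    unfolding K_def J_def by (rule int_lin) (intro continuous_intros; simp add: continuous_on_id)+
  finally show ?thesis by (simp add: algebra_simps)
qed

lemma rel2: "(real n + 1) * J (Suc n) = (2 * real n + 1) * K n"
proof (cases n)
  case 0 then show ?thesis by (simp add: J_def K_def)
next
  case (Suc j)
  have "(real j + 2) * J (Suc (Suc j)) = integral {-1..1} (\<lambda>x. (real j + 2) * (legendre (Suc (Suc j)) x * legendre (Suc (Suc j)) x))"
    unfolding J_def by simp
  also have "\<dots> = integral {-1..1} (\<lambda>x. (2 * real j + 3) * (x * legendre (Suc j) x * legendre (Suc (Suc j)) x) + (- (real j + 1)) * (legendre j x * legendre (Suc (Suc j)) x))"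
    unfolding pw2 ..
  also have "\<dots> = (2 * real j + 3) * K (Suc j) + (- (real j + 1)) * integral {-1..1} (\<lambda>x. legendre j x * legendre (Suc (Suc j)) x)"
    unfolding K_def by (rule int_lin) (intro continuous_intros; simp add: continuous_on_id)+
  also have "\<dots> = (2 * real j + 3) * K (Suc j)" using leg_orth[of j "Suc (Suc j)"] by simp
  finally show ?thesis using Suc by (simp add: algebra_simps)
qed
lemma J_val: "J n = 2 / (2 * real n + 1)"
proof (induction n)
  case 0 then show ?case by (simp add: J_def)
next
  case (Suc n)
  have nz: "2 * real n + 1 > 0" "2 * real n + 3 > 0" "real n + 1 > 0" by auto
  have K: "K n = 2 * (real n + 1) / ((2 * real n + 1) * (2 * real n + 3))"
  proof -
    have "K n = (real n + 1) * J n / (2 * real n + 3)" using rel1[of n] nz by (simp add: field_simps)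
    then show ?thesis unfolding Suc by simp
  qed
  have "J (Suc n) = (2 * real n + 1) * K n / (real n + 1)" using rel2[of n] nz by (simp add: field_simps)
  also have "\<dots> = 2 / (2 * real n + 3)"
  proof -
    have nz2: "2 * real n + 1 \<noteq> 0" "real n + 1 \<noteq> 0" by linarith+
    show ?thesis unfolding K using nz2 by (simp add: divide_simps)
  qed
  finally show ?case by (simp add: algebra_simps)
qed



definition T :: "nat \<Rightarrow> nat \<Rightarrow> real \<Rightarrow> real" where
  "T n j y = integral {-1..1} (\<lambda>x. legendre n x * legendre j (x + y))"
definition D :: "nat \<Rightarrow> nat \<Rightarrow> real \<Rightarrow> real" where
  "D n j y = integral {-1..1} (\<lambda>x. legendre n x * dleg j (x + y))"

lemma T_deriv: "(T n j has_real_derivative D n j y) (at y)"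
proof -
  have "((\<lambda>y. integral (cbox (-1) 1) (\<lambda>x. legendre n x * legendre j (x + y))) has_field_derivative
      integral (cbox (-1) 1) (\<lambda>x. legendre n x * dleg j (x + y))) (at y within UNIV)"
  proof (rule leibniz_rule_field_derivative[where fx="\<lambda>y x. legendre n x * dleg j (x + y)"])
    fix y x :: real
    have "((\<lambda>y. legendre j (x + y)) has_real_derivative dleg j (x + y) * 1) (at y)"
      by (rule DERIV_chain2[OF leg_deriv]; auto intro!: derivative_eq_intros)
    then show "((\<lambda>y. legendre n x * legendre j (x + y)) has_field_derivative legendre n x * dleg j (x + y)) (at y within UNIV)"
      using DERIV_cmult by fastforce
  next
    fix y :: real
    show "(\<lambda>x. legendre n x * legendre j (x + y)) integrable_on cbox (- 1) 1"
      unfolding cbox_interval by (intro cont_integrable continuous_intros)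
  next
    show "continuous_on (UNIV \<times> cbox (- 1) 1) (\<lambda>(y, x). legendre n x * dleg j (x + y))"
      unfolding split_beta by (intro continuous_intros)
  qed auto
  then show ?thesis unfolding T_def D_def cbox_interval by (simp add: fun_eq_iff)
qed

lemma T_at0: "T n j 0 = integral {-1..1} (\<lambda>x. legendre n x * legendre j x)"
  by (simp add: T_def)

lemma D0: "D n 0 y = 0" by (simp add: D_def)
lemma D1: "D n (Suc 0) y = T n 0 y" by (simp add: D_def T_def)
lemma D2: "D n (Suc (Suc j)) y = D n j y + (2 * real j + 3) * T n (Suc j) y"
proof -
  have "D n (Suc (Suc j)) y = integral {-1..1} (\<lambda>x. 1 * (legendre n x * dleg j (x + y)) + (2 * real j + 3) * (legendre n x * legendre (Suc j) (x + y)))"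
    unfolding D_def dleg_a by (simp add: algebra_simps)
  also have "\<dots> = D n j y + (2 * real j + 3) * T n (Suc j) y"
    unfolding D_def T_def by (subst int_lin) (auto intro!: continuous_intros)
  finally show ?thesis .
qed

lemma const_from_deriv:
  assumes "\<And>y. (f has_real_derivative 0) (at y)"
  shows "f y = f 0"
  using DERIV_isconst_all assms by blast

lemma D_zero: "j \<le> n \<Longrightarrow> D n j y = 0"
proof (induction j arbitrary: y rule: less_induct)
  case (less j)
  have Tz: "T n i y = 0" if "i < j" for i y
  proof -
    have "(T n i has_real_derivative 0) (at z)" for z
    proof -
      have "D n i z = 0" using less.IH[of i] that less.prems by simp
      then show ?thesis using T_deriv[of n i z] by simp
    qed
    then have "T n i y = T n i 0" by (rule const_from_deriv)
    also have "\<dots> = 0" unfolding T_at0 by (rule leg_orth) (use that less in auto)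
    finally show ?thesis .
  qed
  show ?case
  proof (cases j)
    case 0 then show ?thesis by (simp add: D0)
  next
    case (Suc k)
    show ?thesis
    proof (cases k)
      case 0 then show ?thesis using Suc by (simp add: D1 Tz)
    next
      case (Suc i)
      have "D n i y = 0" using less \<open>j = Suc k\<close> Suc by auto
      then show ?thesis using \<open>j = Suc k\<close> Suc by (simp add: D2 Tz)
    qed
  qed
qed

lemma T_zero: "j < n \<Longrightarrow> T n j y = 0"
proof -
  assume j: "j < n"
  have "(T n j has_real_derivative 0) (at z)" for z
    using T_deriv[of n j z] D_zero[of j n z] j by simp
  then have "T n j y = T n j 0" by (rule const_from_deriv)
  also have "\<dots> = 0" unfolding T_at0 by (rule leg_orth) (use j in auto)
  finally show ?thesis .
qed

lemma T_diag: "T n n y = 2 / (2 * real n + 1)"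
proof -
  have "(T n n has_real_derivative 0) (at z)" for z
    using T_deriv[of n n z] D_zero[of n n z] by simp
  then have "T n n y = T n n 0" by (rule const_from_deriv)
  also have "\<dots> = 2 / (2 * real n + 1)" unfolding T_at0 using J_val[of n] by (simp add: J_def)
  finally show ?thesis .
qed

lemma D_Suc: "D n (Suc n) y = 2"
proof (cases n)
  case 0 then show ?thesis using T_diag[of 0] by (simp add: D1)
next
  case (Suc i)
  then show ?thesis using D_zero[of i n] T_diag[of n] by (simp add: D2 field_simps)
qed



definition Pr :: "nat \<Rightarrow> nat \<Rightarrow> nat \<Rightarrow> real" where
  "Pr n s L = (\<Prod>i<L. 2 * real n + 2 * real s + 3 + 2 * real i)"
definition B :: "nat \<Rightarrow> nat \<Rightarrow> nat \<Rightarrow> real" where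
  "B n L k = 2 * fact (L + k) / (fact (L + 1) * fact L * fact k) * Pr n k L"
definition Bc :: "nat \<Rightarrow> nat \<Rightarrow> nat \<Rightarrow> real" where
  "Bc n M k = (if 2 * k + 1 \<le> M then B n (M - 1 - 2 * k) k else 0)"
definition q :: "nat \<Rightarrow> nat \<Rightarrow> real \<Rightarrow> real" where
  "q n M y = (if M = 0 then 2 / (2 * real n + 1) else 0) + (\<Sum>k<M. Bc n M k * y ^ (M - 2 * k))"
definition dq :: "nat \<Rightarrow> nat \<Rightarrow> real \<Rightarrow> real" where
  "dq n M y = (\<Sum>k<M. Bc n M k * (real (M - 2 * k) * y ^ (M - 2 * k - 1)))"

lemma Pr_Suc: "Pr n s (Suc L) = Pr n s L * (2 * real n + 2 * real s + 3 + 2 * real L)"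
  by (simp add: Pr_def)
lemma Pr_Suc_shift: "Pr n s (Suc L) = (2 * real n + 2 * real s + 3) * Pr n (Suc s) L"
  unfolding Pr_def prod.lessThan_Suc_shift by (simp add: algebra_simps)

lemma factS: "(fact (Suc m) :: real) = (real m + 1) * fact m"
  by (simp add: algebra_simps)

lemma Bcore:
  assumes "L + 2 * k \<ge> 1"
  shows "(real L + 1) * B n L k = (if k \<ge> 1 then (real L + 1) * B n L (k - 1) else 0)
     + (if L \<ge> 1 then (2 * real n + 2 * real L + 4 * real k + 1) * B n (L - 1) k else 0)"
proof (cases k)
  case 0
  then obtain L' where L: "L = Suc L'" using assms by (cases L) auto
  have p: "(fact L' :: real) > 0" "real L' + 1 > 0" "real L' + 2 > 0" by auto
  have "(real L + 1) * B n L k = 2 * Pr n 0 L' * (2 * real n + 3 + 2 * real L') / fact (Suc L')"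
    unfolding 0 L B_def Pr_Suc using p by (simp add: factS divide_simps; simp add: algebra_simps)
  also have "\<dots> = (2 * real n + 2 * real L + 4 * real k + 1) * B n (L - 1) k"
    unfolding 0 L B_def using p by (simp add: factS divide_simps; simp add: algebra_simps)
  finally show ?thesis using 0 L by simp
next
  case (Suc k')
  show ?thesis
  proof (cases L)
    case 0 then show ?thesis unfolding Suc B_def Pr_def by simp
  next
    case (Suc L')
    have e: "Pr n (Suc k') (Suc L') = Pr n (Suc k') L' * (2 * real n + 2 * real (Suc k') + 3 + 2 * real L')"
      by (rule Pr_Suc)
    have e2: "Pr n k' (Suc L') = (2 * real n + 2 * real k' + 3) * Pr n (Suc k') L'"
      by (rule Pr_Suc_shift)
    have f: "(fact (Suc L' + Suc k') :: real) = (real L' + real k' + 2) * (real L' + real k' + 1) * fact (L' + k')"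
      "(fact (Suc L' + k') :: real) = (real L' + real k' + 1) * fact (L' + k')"
      "(fact (L' + Suc k') :: real) = (real L' + real k' + 1) * fact (L' + k')"
      by (simp_all add: factS algebra_simps)
    have p: "(fact L' :: real) > 0" "(fact k' :: real) > 0" "(fact (L' + k') :: real) > 0" "real L' + 1 > 0" "real L' + 2 > 0" "real k' + 1 > 0"
      "real L' + real k' + 1 > 0"  by auto
    show ?thesis unfolding Suc \<open>k = Suc k'\<close> B_def e e2 using p
      by (simp add: f e2 factS divide_simps; simp add: algebra_simps)
  qed
qed


lemma q_deriv: "(q n M has_real_derivative dq n M y) (at y)"
proof -
  have "((\<lambda>y. \<Sum>k<M. Bc n M k * y ^ (M - 2 * k)) has_real_derivative (\<Sum>k<M. Bc n M k * (real (M - 2 * k) * y ^ (M - 2 * k - 1)))) (at y)"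
  proof -
    have p: "((\<lambda>x. x ^ j) has_real_derivative real j * y ^ (j - 1)) (at y)" for j
      using DERIV_pow[of j y UNIV] by simp
    show ?thesis by (intro DERIV_sum DERIV_cmult p)
  qed
  then have "((\<lambda>y. (if M = 0 then 2 / (2 * real n + 1) else 0) + (\<Sum>k<M. Bc n M k * y ^ (M - 2 * k))) has_real_derivative 0 + (\<Sum>k<M. Bc n M k * (real (M - 2 * k) * y ^ (M - 2 * k - 1)))) (at y)"
    by (intro DERIV_add DERIV_const)
  then show ?thesis unfolding q_def[abs_def] dq_def by simp
qed

lemma term_id:
  "Bc n (Suc (Suc M)) k * (real (Suc (Suc M) - 2 * k) * y ^ (Suc (Suc M) - 2 * k - 1)) =
   (if k = 0 then 0 else Bc n M (k - 1) * (real (M - 2 * (k - 1)) * y ^ (M - 2 * (k - 1) - 1)))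
   + (2 * real n + 2 * real M + 3) * (Bc n (Suc M) k * y ^ (Suc M - 2 * k))"
proof (cases "2 * k + 1 \<le> Suc (Suc M)")
  case False
  then show ?thesis by (auto simp: Bc_def)
next
  case True
  then obtain L where L: "M + 1 = L + 2 * k" by (metis add.commute le_add_diff_inverse2 Suc_eq_plus1 add_Suc_right
        Suc_le_mono add_leD2 le_add_diff_inverse mult_2 plus_1_eq_Suc)
  have core: "(real L + 1) * B n L k = (if k \<ge> 1 then (real L + 1) * B n L (k - 1) else 0)
     + (if L \<ge> 1 then (2 * real n + 2 * real L + 4 * real k + 1) * B n (L - 1) k else 0)"
    by (rule Bcore) (use L in linarith)
  have "Suc (Suc M) - 1 - 2 * k = L" using L by linarith
  then have a1: "Bc n (Suc (Suc M)) k = B n L k" unfolding Bc_def using True by simp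
  have a2: "real (Suc (Suc M) - 2 * k) = real L + 1" "Suc (Suc M) - 2 * k - 1 = L" using L by auto
  have a3: "k \<noteq> 0 \<Longrightarrow> Bc n M (k - 1) = B n L (k - 1)" "k \<noteq> 0 \<Longrightarrow> real (M - 2 * (k - 1)) = real L + 1"
    "k \<noteq> 0 \<Longrightarrow> M - 2 * (k - 1) - 1 = L"
  proof -
    assume k: "k \<noteq> 0"
    have e1: "M - 1 - 2 * (k - 1) = L" "2 * (k - 1) + 1 \<le> M" using L k by linarith+
    show "Bc n M (k - 1) = B n L (k - 1)" unfolding Bc_def using e1 by simp
    show "real (M - 2 * (k - 1)) = real L + 1" using L k by linarith
    show "M - 2 * (k - 1) - 1 = L" using L k by linarith
  qed
  have a4: "Bc n (Suc M) k = (if L \<ge> 1 then B n (L - 1) k else 0)" "Suc M - 2 * k = L"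
    using L by (auto simp: Bc_def)
  have a5: "2 * real n + 2 * real M + 3 = 2 * real n + 2 * real L + 4 * real k + 1"
  proof -
    have "real M + 1 = real L + 2 * real k" using L by (metis of_nat_add of_nat_1 of_nat_mult of_nat_numeral)
    then show ?thesis by linarith
  qed
  show ?thesis
  proof (cases "k = 0")
    case True
    then show ?thesis using arg_cong[OF core, of "\<lambda>t. y ^ L * t"] unfolding a1 a2 a4 a5 by (auto simp: algebra_simps)
  next
    case False
    then show ?thesis using arg_cong[OF core, of "\<lambda>t. y ^ L * t"] unfolding a1 a2 a4 a5 a3[OF False] by (auto simp: algebra_simps)
  qed
qed

lemma dq_rec: "dq n (Suc (Suc M)) y = dq n M y + (2 * real n + 2 * real M + 3) * q n (Suc M) y"
proof -
  define g where "g k = (if k = 0 then 0 else Bc n M (k - 1) * (real (M - 2 * (k - 1)) * y ^ (M - 2 * (k - 1) - 1)))" for k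
  have s1: "dq n M y = (\<Sum>k<Suc (Suc M). g k)"
  proof -
    have "(\<Sum>k<Suc (Suc M). g k) = g 0 + (\<Sum>k<Suc M. g (Suc k))" by (rule sum.lessThan_Suc_shift)
    also have "\<dots> = (\<Sum>k<Suc M. Bc n M k * (real (M - 2 * k) * y ^ (M - 2 * k - 1)))" by (simp add: g_def)
    also have "\<dots> = dq n M y" by (simp add: dq_def Bc_def)
    finally show ?thesis by simp
  qed
  have s2: "q n (Suc M) y = (\<Sum>k<Suc (Suc M). Bc n (Suc M) k * y ^ (Suc M - 2 * k))"
    by (simp add: q_def Bc_def)
  show ?thesis unfolding s1 s2 sum_distrib_left sum.distrib[symmetric] unfolding dq_def g_def
    by (rule sum.cong[OF refl]) (rule term_id)
qed

lemma q0: "q n 0 y = 2 / (2 * real n + 1)" by (simp add: q_def)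
lemma q1: "q n (Suc 0) y = 2 * y" by (simp add: q_def Bc_def B_def Pr_def)
lemma q_at0: "q n (Suc M) 0 = 0"
proof -
  have "(\<Sum>k<Suc M. Bc n (Suc M) k * 0 ^ (Suc M - 2 * k)) = (0::real)"
    by (rule sum.neutral) (auto simp: Bc_def)
  then show ?thesis by (simp add: q_def)
qed



lemma hyp_Suc: "hyp4F3_coeff a1 a2 a3 a4 b1 b2 b3 (Suc k) = hyp4F3_coeff a1 a2 a3 a4 b1 b2 b3 k *
   ((a1 + real k) * (a2 + real k) * (a3 + real k) * (a4 + real k) / ((b1 + real k) * (b2 + real k) * (b3 + real k) * (real k + 1)))"
proof -
  have e: "\<And>A B a b :: real. (A * a) / (B * b) = (A / B) * (a / b)" by simp
  show ?thesis unfolding hyp4F3_coeff_def pochhammer_rec' fact_Suc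
    by (subst e[symmetric]) (simp add: ac_simps)
qed


lemma Gamma_shift: "x > 0 \<Longrightarrow> Gamma (x + real j) = Gamma x * (\<Prod>i<j. x + real i)"
proof (induction j)
  case 0 then show ?case by simp
next
  case (Suc j)
  have nz: "x + real j \<notin> \<int>\<^sub>\<le>\<^sub>0" using Suc.prems by (auto dest: nonpos_Ints_nonpos)
  have "Gamma (x + real (Suc j)) = Gamma ((x + real j) + 1)" by (simp add: algebra_simps)
  also have "\<dots> = (x + real j) * Gamma (x + real j)" by (rule Gamma_plus1[OF nz])
  finally show ?case using Suc by (simp add: algebra_simps)
qed

lemma prefactor:
  "Gamma (real (Suc M) + real n + 1/2) / (Gamma (real (Suc M) + 1) * Gamma (real n + 3/2)) * 2 ^ Suc M = B n M 0"
proof -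
  have g1: "Gamma (real (Suc M) + real n + 1/2) = Gamma (real n + 3/2) * (\<Prod>i<M. real n + 3/2 + real i)"
  proof -
    have "Gamma (real (Suc M) + real n + 1/2) = Gamma ((real n + 3/2) + real M)" by (simp add: algebra_simps)
    then show ?thesis using Gamma_shift[of "real n + 3/2" M] by simp
  qed
  have g2: "Gamma (real (Suc M) + 1) = fact (Suc M)"
    using Gamma_fact[of "Suc M", where 'a=real] by (simp add: add.commute)
  have gp: "Gamma (real n + 3/2) > 0" by (intro Gamma_real_pos) simp
  have pr: "Pr n 0 M = 2 ^ M * (\<Prod>i<M. real n + 3/2 + real i)"
  proof -
    have "Pr n 0 M = (\<Prod>i<M. 2 * (real n + 3/2 + real i))" unfolding Pr_def by (rule prod.cong) (simp_all add: algebra_simps)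
    also have "\<dots> = 2 ^ M * (\<Prod>i<M. real n + 3/2 + real i)" unfolding prod.distrib by simp
    finally show ?thesis .
  qed
  have fp: "(fact M :: real) > 0" "(fact (Suc M) :: real) > 0" by auto
  have bb: "B n M 0 = 2 * Pr n 0 M / fact (Suc M)"
    unfolding B_def using fp by (simp del: fact_Suc)
  obtain G where G: "G = Gamma (real n + 3/2)" by blast
  have Gnz: "G \<noteq> 0" unfolding G using gp by linarith
  show ?thesis unfolding g1 g2 bb pr G[symmetric] using Gnz fp by (simp del: fact_Suc add: divide_simps)

qed

lemma Bratio: "B n L (Suc k) * ((real L + 2 + real k) * (2 * real L + 2 * real k + 2 * real n + 5) * (2 * real n + 2 * real k + 3) * (real k + 1))
   = B n (L + 2) k * ((real L + 3) * (real L + 2)^2 * (real L + 1))"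
proof -
  have pr: "Pr n k (Suc (Suc L)) = (2 * real n + 2 * real k + 3) * (Pr n (Suc k) L * (2 * real n + 2 * real k + 2 * real L + 5))"
    by (subst Pr_Suc_shift, subst Pr_Suc) (simp add: algebra_simps)
  have b1: "B n (L + 2) k = 2 * ((real L + real k + 2) * (real L + real k + 1) * fact (L + k)) /
      (((real L + 3) * (real L + 2) * (real L + 1) * fact L) * ((real L + 2) * (real L + 1) * fact L) * fact k)
      * ((2 * real n + 2 * real k + 3) * (Pr n (Suc k) L * (2 * real n + 2 * real k + 2 * real L + 5)))"
  proof -
    have "L + 2 = Suc (Suc L)" by simp
    then have "B n (L + 2) k = B n (Suc (Suc L)) k" by simp
    also have "\<dots> = 2 * fact (Suc (Suc (L + k))) / (fact (Suc (Suc (Suc L))) * fact (Suc (Suc L)) * fact k) * Pr n k (Suc (Suc L))"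
      unfolding B_def by simp
    also have "\<dots> = 2 * ((real L + real k + 2) * (real L + real k + 1) * fact (L + k)) /
      (((real L + 3) * (real L + 2) * (real L + 1) * fact L) * ((real L + 2) * (real L + 1) * fact L) * fact k)
      * ((2 * real n + 2 * real k + 3) * (Pr n (Suc k) L * (2 * real n + 2 * real k + 2 * real L + 5)))"
      unfolding pr factS by (simp add: algebra_simps)
    finally show ?thesis .
  qed
  have b2: "B n L (Suc k) = 2 * ((real L + real k + 1) * fact (L + k)) / (((real L + 1) * fact L) * fact L * ((real k + 1) * fact k)) * Pr n (Suc k) L"
    unfolding B_def by (simp add: factS algebra_simps)
  have p: "(fact L :: real) > 0" "(fact k :: real) > 0" "(fact (L + k) :: real) > 0" "real L + 1 > 0" "real L + 2 > 0"
    "real L + 3 > 0" "real k + 1 > 0" "real L + real k + 1 > 0" "real L + real k + 2 > 0" by auto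
  show ?thesis unfolding b1 b2
    using p by (simp add: divide_simps power2_eq_square; simp add: algebra_simps)
qed


lemma gen_div: fixes x y N D :: real assumes "x * D = y * N" "D \<noteq> 0" shows "y * (N / D) = x"
  using assms by (simp add: field_simps)

lemma rr: fixes L k n :: nat shows
  "4 * ((- (real L + 3 + 2 * real k) / 2 + real k) * ((1 - (real L + 3 + 2 * real k)) / 2 + real k) * ((1 - (real L + 3 + 2 * real k)) / 2 + real k) * ((2 - (real L + 3 + 2 * real k)) / 2 + real k) /
      ((1 - (real L + 3 + 2 * real k) + real k) * (1/2 - (real L + 3 + 2 * real k) - real n + real k) * (real n + 3/2 + real k) * (real k + 1)))
   = ((real L + 3) * (real L + 2)^2 * (real L + 1)) /
        ((real L + 2 + real k) * (2 * real L + 2 * real k + 2 * real n + 5) * (2 * real n + 2 * real k + 3) * (real k + 1))"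
proof -
  have e1: "- (real L + 3 + 2 * real k) / 2 + real k = - (real L + 3) / 2" by (simp add: field_simps)
  have e2: "(1 - (real L + 3 + 2 * real k)) / 2 + real k = - (real L + 2) / 2" by (simp add: field_simps)
  have e3: "(2 - (real L + 3 + 2 * real k)) / 2 + real k = - (real L + 1) / 2" by (simp add: field_simps)
  have e4: "1 - (real L + 3 + 2 * real k) + real k = - (real L + 2 + real k)" by simp
  have e5: "1/2 - (real L + 3 + 2 * real k) - real n + real k = - (2 * real L + 2 * real k + 2 * real n + 5) / 2" by (simp add: field_simps)
  have e6: "real n + 3/2 + real k = (2 * real n + 2 * real k + 3) / 2" by (simp add: field_simps)
  define A where "A = (real L + 3) * (real L + 2)^2 * (real L + 1)"
  define D where "D = (real L + 2 + real k) * (2 * real L + 2 * real k + 2 * real n + 5) * (2 * real n + 2 * real k + 3) * (real k + 1)"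
  have n1: "4 * ((- (real L + 3) / 2) * (- (real L + 2) / 2) * (- (real L + 2) / 2) * (- (real L + 1) / 2)) = A / 4"
  proof -
    have g: "\<And>a b d :: real. 4 * ((-a/2)*(-b/2)*(-b/2)*(-d/2)) = (a*b^2*d)/4" by (simp add: power2_eq_square field_simps)
    show ?thesis unfolding A_def by (rule g)
  qed
  have n2: "(- (real L + 2 + real k)) * (- (2 * real L + 2 * real k + 2 * real n + 5) / 2) * ((2 * real n + 2 * real k + 3) / 2) * (real k + 1) = D / 4"
  proof -
    have g: "\<And>a b c d :: real. (-a) * (-b/2) * (c/2) * d = a*b*c*d/4" by (simp add: field_simps)
    show ?thesis unfolding D_def by (rule g)
  qed
  have "4 * ((- (real L + 3) / 2) * (- (real L + 2) / 2) * (- (real L + 2) / 2) * (- (real L + 1) / 2) / 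
     ((- (real L + 2 + real k)) * (- (2 * real L + 2 * real k + 2 * real n + 5) / 2) * ((2 * real n + 2 * real k + 3) / 2) * (real k + 1))) = A / D"
  proof -
    have g: "\<And>P Q :: real. 4 * (P / Q) = (4 * P) / Q" by simp
    have g2: "\<And>A D :: real. (A / 4) / (D / 4) = A / D" by simp
    show ?thesis unfolding g n1 n2 g2 ..
  qed
  then show ?thesis unfolding e1 e2 e3 e4 e5 e6 A_def D_def .
qed

lemma bval: fixes G :: real assumes "G \<noteq> 0" shows "G / (Gamma 1 * ((real n + 1/2) * G)) = 2 / (2 * real n + 1)"
proof -
  have "G / (Gamma 1 * ((real n + 1/2) * G)) = 1 / (real n + 1/2)" using assms by simp
  also have "\<dots> = 2 / (2 * real n + 1)" by (simp add: divide_simps)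
  finally show ?thesis .
qed

definition hk :: "nat \<Rightarrow> nat \<Rightarrow> nat \<Rightarrow> real" where
  "hk m n k = hyp4F3_coeff (- real m / 2) ((1 - real m) / 2) ((1 - real m) / 2) ((2 - real m) / 2)
                     (1 - real m) (1/2 - real m - real n) (real n + 3/2) k"
definition pref :: "nat \<Rightarrow> nat \<Rightarrow> real" where
  "pref m n = Gamma (real m + real n + 1/2) / (Gamma (real m + 1) * Gamma (real n + 3/2)) * 2 ^ m"

lemma tk: "1 \<le> m \<Longrightarrow> k \<le> m div 2 \<Longrightarrow> pref m n * (hk m n k * 4 ^ k) = Bc n m k"
proof (induction k)
  case 0
  then obtain M where m: "m = Suc M" by (cases m) auto
  have "hk m n 0 = 1" by (simp add: hk_def hyp4F3_coeff_def)
  then show ?case using prefactor[of M n] unfolding pref_def m by (simp add: Bc_def)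
next
  case (Suc k)
  define r where "r = 4 * ((- real m / 2 + real k) * ((1 - real m) / 2 + real k) * ((1 - real m) / 2 + real k) * ((2 - real m) / 2 + real k) /
      ((1 - real m + real k) * (1/2 - real m - real n + real k) * (real n + 3/2 + real k) * (real k + 1)))"
  have h: "hk m n (Suc k) * 4 ^ Suc k = (hk m n k * 4 ^ k) * r"
    unfolding hk_def hyp_Suc r_def by (simp add: algebra_simps)
  have IH: "pref m n * (hk m n k * 4 ^ k) = Bc n m k" using Suc by simp
  have "pref m n * (hk m n (Suc k) * 4 ^ Suc k) = Bc n m k * r" unfolding h IH[symmetric] by (simp add: algebra_simps)
  also have "\<dots> = Bc n m (Suc k)"
  proof (cases "2 * k + 3 \<le> m")
    case True
    define L where "L = m - 3 - 2 * k"
    have L: "m = L + 3 + 2 * k" using True unfolding L_def by linarith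
    have rm: "real m = real L + 3 + 2 * real k" using L by simp
    have bc1: "Bc n m k = B n (L + 2) k" unfolding Bc_def using L by (simp add: algebra_simps)
    have bc2: "Bc n m (Suc k) = B n L (Suc k)" unfolding Bc_def using L by simp
    have rr: "r = ((real L + 3) * (real L + 2)^2 * (real L + 1)) /
        ((real L + 2 + real k) * (2 * real L + 2 * real k + 2 * real n + 5) * (2 * real n + 2 * real k + 3) * (real k + 1))"
    proof -
      have p: "real L + 2 + real k > 0" "2 * real L + 2 * real k + 2 * real n + 5 > 0" "2 * real n + 2 * real k + 3 > 0" "real k + 1 > 0" by auto
      show ?thesis unfolding r_def rm by (rule rr)
    qed
    have p: "(real L + 2 + real k) * (2 * real L + 2 * real k + 2 * real n + 5) * (2 * real n + 2 * real k + 3) * (real k + 1) \<noteq> 0" by auto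
    show ?thesis unfolding bc1 bc2 rr by (rule gen_div[OF Bratio[of n L k] p])
  next
    case False
    then have m2: "m = 2 * k + 2" using Suc.prems by linarith
    have "r = 0" unfolding r_def m2 by simp
    moreover have "Bc n m (Suc k) = 0" unfolding Bc_def m2 by simp
    ultimately show ?thesis by simp
  qed
  finally show ?case .
qed

lemma rhs_q: "R_rhs m n y = q n m y"
proof (cases m)
  case 0
  have g: "Gamma (real n + 3/2) = (real n + 1/2) * Gamma (real n + 1/2)"
  proof -
    have nz: "real n + 1/2 \<notin> \<int>\<^sub>\<le>\<^sub>0" by (auto dest: nonpos_Ints_nonpos)
    have "Gamma (real n + 3/2) = Gamma ((real n + 1/2) + 1)" by (simp add: algebra_simps)
    then show ?thesis using Gamma_plus1[OF nz] by simp
  qed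
  obtain G where G: "G = Gamma (real n + 1/2)" by blast
  have gp: "Gamma (real n + 1/2) > 0" by (intro Gamma_real_pos) simp
  have Gnz: "G \<noteq> 0" unfolding G using gp by linarith
  have a: "R_rhs 0 n y = Gamma (real n + 1/2) / (Gamma 1 * Gamma (real n + 3/2))"
    unfolding R_rhs_def hyp4F3_coeff_def by simp
  have b: "Gamma (real n + 1/2) / (Gamma 1 * Gamma (real n + 3/2)) = 2 / (2 * real n + 1)"
    unfolding g G[symmetric] using Gnz by (rule bval)
  show ?thesis using a b unfolding 0 by (simp add: q_def)
next
  case (Suc M)
  have "R_rhs m n y = (\<Sum>k\<in>{0..m div 2}. pref m n * (hk m n k * 4 ^ k) * y ^ (m - 2 * k))"
    unfolding R_rhs_def pref_def hk_def sum_distrib_left by (rule sum.cong) (auto simp: algebra_simps)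
  also have "\<dots> = (\<Sum>k\<in>{0..m div 2}. Bc n m k * y ^ (m - 2 * k))"
    by (rule sum.cong[OF refl]) (simp add: tk Suc)
  also have "\<dots> = (\<Sum>k<m. Bc n m k * y ^ (m - 2 * k))"
    by (rule sum.mono_neutral_left) (auto simp: Suc Bc_def)
  also have "\<dots> = q n m y" unfolding q_def using Suc by simp
  finally show ?thesis .
qed



lemma T_orth0: "M \<noteq> 0 \<Longrightarrow> T n (n + M) 0 = 0"
  unfolding T_at0 by (rule leg_orth) simp

lemma main_T: "T n (n + M) y = q n M y \<and> T n (n + Suc M) y = q n (Suc M) y"
proof (induction M arbitrary: y)
  case 0
  have a: "T n n y = q n 0 y" for y by (simp add: T_diag q0)
  have "((\<lambda>y. T n (Suc n) y - 2 * y) has_real_derivative 0) (at z)" for z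
  proof -
    have "((\<lambda>y. T n (Suc n) y - 2 * y) has_real_derivative D n (Suc n) z - 2 * 1) (at z)"
      by (intro DERIV_diff T_deriv DERIV_cmult DERIV_ident)
    then show ?thesis by (simp add: D_Suc)
  qed
  then have "T n (Suc n) y - 2 * y = T n (Suc n) 0 - 2 * 0" by (rule const_from_deriv)
  then have "T n (Suc n) y = 2 * y" using T_orth0[of 1 n] by simp
  then show ?case using a by (simp add: q1)
next
  case (Suc M)
  have IH1: "T n (n + M) = q n M" using Suc.IH by blast
  have IH2: "T n (n + Suc M) = q n (Suc M)" using Suc.IH by blast
  have dM: "D n (n + M) z = dq n M z" for z
    using DERIV_unique[OF T_deriv[of n "n + M" z]] q_deriv[of n M z] IH1 by simp
  have "((\<lambda>y. T n (n + Suc (Suc M)) y - q n (Suc (Suc M)) y) has_real_derivative 0) (at z)" for z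
  proof -
    have "((\<lambda>y. T n (n + Suc (Suc M)) y - q n (Suc (Suc M)) y) has_real_derivative
        D n (n + Suc (Suc M)) z - dq n (Suc (Suc M)) z) (at z)"
      by (intro DERIV_diff T_deriv q_deriv)
    moreover have "D n (n + Suc (Suc M)) z = D n (n + M) z + (2 * real (n + M) + 3) * T n (Suc (n + M)) z"
      using D2[of n "n + M" z] by simp
    moreover have "T n (Suc (n + M)) z = q n (Suc M) z" using IH2 by (metis add_Suc_right)
    moreover have "dq n (Suc (Suc M)) z = dq n M z + (2 * real n + 2 * real M + 3) * q n (Suc M) z"
      by (rule dq_rec)
    ultimately have "D n (n + Suc (Suc M)) z - dq n (Suc (Suc M)) z = 0"
      using dM[of z] by (simp add: algebra_simps)
    with \<open>(_ has_real_derivative _) _\<close> show ?thesis by simp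
  qed
  then have "T n (n + Suc (Suc M)) y - q n (Suc (Suc M)) y = T n (n + Suc (Suc M)) 0 - q n (Suc (Suc M)) 0"
    by (rule const_from_deriv)
  then have "T n (n + Suc (Suc M)) y = q n (Suc (Suc M)) y" using T_orth0[of "Suc (Suc M)" n] q_at0[of n "Suc M"] by simp
  then show ?case using IH2 by simp
qed


theorem theorem5:
  fixes m n :: nat and y :: real
  shows "integral {-1..1} (\<lambda>x. legendre n x * legendre (n + m) (x + y)) = R_rhs m n y"
proof -
  have "integral {-1..1} (\<lambda>x. legendre n x * legendre (n + m) (x + y)) = T n (n + m) y"
    by (simp add: T_def)
  also have "\<dots> = q n m y" using main_T by blast
  also have "\<dots> = R_rhs m n y" by (simp add: rhs_q)
  finally show ?thesis .
qed

end
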